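(* Let $\vec X\in\underline V^h$ with $|\vec X_\rho|>0$ a.e. on $I$, and let $\kappa\in V^h$ be such that $$\big(\kappa\,\vec\nu,\vec\eta\,|\vec X_\rho|\big)^h+\big(\vec X_\rho,\vec\eta_\rho|\vec X_\rho|^{-1}\big)=-\sum_{i=1}^2\sum_{p\in\partial_iI}\widehat\varrho^{(p)}\,\vec\eta(p)\cdot\vec e_{3-i}\qquad\forall\,\vec\eta\in\underline V^h_\partial .$$ Let $\vec h_j=\vec X(q_j)-\vec X(q_{j-1})$ for $j=1,\dots,J$, and $\vec h_0=\vec h_J$ if $\partial I=\emptyset$. Then $|\vec h_j|=|\vec h_{j-1}|$ whenever $\vec h_j$ and $\vec h_{j-1}$ are not parallel, for $j=1,\dots,J$ if $\partial I=\emptyset$ and for $j=2,\dots,J$ if $\partial I\neq\emptyset$.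
   Context: Setup. $\vec e_1=(1,0)^T$, $\vec e_2=(0,1)^T$; "$\cdot$" is the Euclidean inner product. $I$ is either the periodic interval $\mathbb R/\mathbb Z$ (with $\partial I=\emptyset$) or $I=(0,1)$ (with $\partial I=\{0,1\}$). $\partial I=\partial_DI\cup\partial_0I\cup\partial_1I\cup\partial_2I$ is a given disjoint partition, and $\widehat\varrho^{(p)}\in\mathbb R$, $p\in\{0,1\}$, are given constants. Let $J\ge3$, $h=1/J$, $q_j=jh$ ($j=0,\dots,J$; $q_0=q_J$ identified in the periodic case). $V^h$ is the space of continuous functions on $\overline I$ (periodic if $I=\mathbb R/\mathbb Z$) that are affine on each $[q_{j-1},q_j]$; $\underline V^h=[V^h]^2$; $\underline V^h_\partial=\{\vec\eta\in\underline V^h:\vec\eta(\rho)\cdot\vec e_1=0\ \forall\rho\in\partial_0I;\ \vec\eta(\rho)\cdot\vec e_i=0\ \forall\rho\in\partial_iI,\ i=1,2;\ \vec\eta(\rho)=\vec0\ \forall\rho\in\partial_DI\}$. $(\cdot,\cdot)$ is the $L^2(I)$ inner product, and for piecewise continuous $f,g$ the mass-lumped product is $(f,g)^h=\tfrac h2\sum_{j=1}^J[(fg)(q_j^-)+(fg)(q_{j-1}^+)]$. $\vec\nu=-[\vec X_\rho]^\perp/|\vec X_\rho|$ (piecewise constant), where $(a,b)^\perp=(b,-a)$. *)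

theory Defs
  imports "HOL-Analysis.Analysis"
begin

text \<open>Finite element functions in V^h are represented by their nodal values
  f 0, ..., f J (values beyond J are normalised to 0; in the periodic case
  f J = f 0, since q_0 and q_J are identified). Element j (j = 1..J) is
  [q_(j-1), q_j]; on it the affine function has one-sided nodal values
  f(q_(j-1)^+) = f (j-1) and f(q_j^-) = f j.\<close>

type_synonym vec2 = "real^2"

definition e1 :: vec2 where "e1 = axis 1 1"
definition e2 :: vec2 where "e2 = axis 2 1"

definition perp :: "vec2 \<Rightarrow> vec2" where
  "perp v = (\<chi> i. if i = 1 then v $ 2 else - (v $ 1))"

definition hstep :: "nat \<Rightarrow> real" where "hstep J = 1 / real J"

definition Vh :: "bool \<Rightarrow> nat \<Rightarrow> (nat \<Rightarrow> real) set" where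
  "Vh per J = {f. (per \<longrightarrow> f J = f 0) \<and> (\<forall>j>J. f j = 0)}"

definition Vh2 :: "bool \<Rightarrow> nat \<Rightarrow> (nat \<Rightarrow> vec2) set" where
  "Vh2 per J = {f. (per \<longrightarrow> f J = f 0) \<and> (\<forall>j>J. f j = 0)}"

text \<open>Which part of the boundary partition an endpoint of (0,1) belongs to:
  \<partial>_D I, \<partial>_0 I, \<partial>_1 I or \<partial>_2 I.\<close>
datatype bc = BC_D | BC_0 | BC_1 | BC_2

fun bc_ok :: "bc \<Rightarrow> vec2 \<Rightarrow> bool" where
  "bc_ok BC_D v = (v = 0)"
| "bc_ok BC_0 v = (v \<bullet> e1 = 0)"
| "bc_ok BC_1 v = (v \<bullet> e1 = 0)"
| "bc_ok BC_2 v = (v \<bullet> e2 = 0)"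

text \<open>The test space V^h_\<partial>; bc0 / bc1 give the part of the partition containing
  the endpoint 0 / 1 (only relevant when per = False, i.e. I = (0,1)).\<close>
definition Vh2_bd :: "bool \<Rightarrow> nat \<Rightarrow> bc \<Rightarrow> bc \<Rightarrow> (nat \<Rightarrow> vec2) set" where
  "Vh2_bd per J bc0 bc1 =
     {eta \<in> Vh2 per J. \<not> per \<longrightarrow> bc_ok bc0 (eta 0) \<and> bc_ok bc1 (eta J)}"

definition drho :: "nat \<Rightarrow> (nat \<Rightarrow> vec2) \<Rightarrow> nat \<Rightarrow> vec2" where
  "drho J f j = (1 / hstep J) *\<^sub>R (f j - f (j - 1))"

definition nuh :: "nat \<Rightarrow> (nat \<Rightarrow> vec2) \<Rightarrow> nat \<Rightarrow> vec2" where
  "nuh J X j = - ((1 / norm (drho J X j)) *\<^sub>R perp (drho J X j))"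

text \<open>Mass-lumped product of a piecewise continuous integrand, given through
  F j k = value of the integrand on element j at its node k (k = j-1 or j):
  (f,g)^h = h/2 sum_j [(fg)(q_j^-) + (fg)(q_(j-1)^+)].\<close>
definition lumped :: "nat \<Rightarrow> (nat \<Rightarrow> nat \<Rightarrow> real) \<Rightarrow> real" where
  "lumped J F = hstep J / 2 * (\<Sum>j\<in>{1..J}. F j j + F j (j - 1))"

definition pc_integral :: "nat \<Rightarrow> (nat \<Rightarrow> real) \<Rightarrow> real" where
  "pc_integral J c = (\<Sum>j\<in>{1..J}. hstep J * c j)"

text \<open>Contribution rho^(p) eta(p).e_(3-i) of an endpoint p in \<partial>_i I (i = 1,2).\<close>
fun bd_term :: "bc \<Rightarrow> real \<Rightarrow> vec2 \<Rightarrow> real" where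
  "bd_term BC_1 r v = r * (v \<bullet> e2)"
| "bd_term BC_2 r v = r * (v \<bullet> e1)"
| "bd_term BC_D r v = 0"
| "bd_term BC_0 r v = 0"

definition bd_sum :: "bool \<Rightarrow> nat \<Rightarrow> bc \<Rightarrow> bc \<Rightarrow> real \<Rightarrow> real \<Rightarrow> (nat \<Rightarrow> vec2) \<Rightarrow> real" where
  "bd_sum per J bc0 bc1 r0 r1 eta =
     (if per then 0 else bd_term bc0 r0 (eta 0) + bd_term bc1 r1 (eta J))"

definition hvec :: "nat \<Rightarrow> (nat \<Rightarrow> vec2) \<Rightarrow> nat \<Rightarrow> vec2" where
  "hvec J X j = (if j = 0 then X J - X (J - 1) else X j - X (j - 1))"

definition parallel :: "vec2 \<Rightarrow> vec2 \<Rightarrow> bool" where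
  "parallel u v \<longleftrightarrow> (\<exists>c::real. u = c *\<^sub>R v \<or> v = c *\<^sub>R u)"

end

theory Submission imports Defs begin
lemma perp_self: "perp x \<bullet> x = 0"
  by (simp add: perp_def inner_vec_def sum_2)
lemma perp_anti: "perp x \<bullet> y + perp y \<bullet> x = 0"
  by (simp add: perp_def inner_vec_def sum_2 algebra_simps)
lemma perp_scale: "perp (c *\<^sub>R x) = c *\<^sub>R perp x"
  by (simp add: perp_def vec_eq_iff)
lemma sum_two:
  assumes "finite S" "a \<in> S" "b \<in> S" "a \<noteq> b" "\<forall>j\<in>S. j \<noteq> a \<and> j \<noteq> b \<longrightarrow> f j = 0"
  shows "sum f S = f a + f b"
proof -
  have "sum f S = sum f {a,b}"
    using assms by (intro sum.mono_neutral_right) auto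
  thus ?thesis using assms by simp
qed
lemma final_alg:
  fixes A B :: vec2
  assumes "A \<noteq> 0" "B \<noteq> 0" "A \<bullet> (A+B) / norm A - B \<bullet> (A+B) / norm B = 0"
    and "\<not> parallel B A"
  shows "norm B = norm A"
proof -
  have a: "norm A > 0" "norm B > 0" using assms by auto
  have "norm B * (A \<bullet> A + A \<bullet> B) = norm A * (B \<bullet> A + B \<bullet> B)"
    using assms(3) a by (simp add: inner_add_right field_simps)
  hence e: "(norm A - norm B) * (norm A * norm B - A \<bullet> B) = 0"
    by (simp add: inner_commute power2_norm_eq_inner[symmetric] algebra_simps power2_eq_square)
  have "A \<bullet> B \<noteq> norm A * norm B"
  proof
    assume "A \<bullet> B = norm A * norm B"
    hence "norm A *\<^sub>R B = norm B *\<^sub>R A" by (simp add: norm_cauchy_schwarz_eq)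
    hence "B = (norm B / norm A) *\<^sub>R A" using a
      by (metis divide_inverse_commute less_irrefl scaleR_right_imp_eq scaleR_scaleR divide_self_if inverse_eq_divide scaleR_one)
    thus False using assms(4) unfolding parallel_def by blast
  qed
  with e show ?thesis by simp
qed
lemma nuh_norm:
  assumes "norm (drho J X j) > 0"
  shows "(nuh J X j \<bullet> w) * norm (drho J X j) = - (perp (drho J X j) \<bullet> w)"
  using assms by (simp add: nuh_def)

lemma core:
  fixes X eta :: "nat \<Rightarrow> vec2" and kappa :: "nat \<Rightarrow> real"
  assumes J: "J \<ge> 1" and pq: "p \<in> {1..J}" "q \<in> {1..J}" "p \<noteq> q"
    and A: "A = X p - X (p - 1)" and B: "B = X q - X (q - 1)"
    and pos: "\<forall>j\<in>{1..J}. norm (drho J X j) > 0"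
    and eqn: "lumped J (\<lambda>j k. kappa k * (nuh J X j \<bullet> eta k) * norm (drho J X j))
         + pc_integral J (\<lambda>j. drho J X j \<bullet> ((1 / norm (drho J X j)) *\<^sub>R drho J eta j)) = 0"
    and oth: "\<forall>j\<in>{1..J}. j \<noteq> p \<and> j \<noteq> q \<longrightarrow> eta j = 0 \<and> eta (j - 1) = 0"
    and ep: "eta p = A + B" "eta (p - 1) = 0" and eq: "eta q = 0" "eta (q - 1) = A + B"
    and kap: "kappa p = kappa (q - 1)"
  shows "A \<bullet> (A+B) / norm A - B \<bullet> (A+B) / norm B = 0"
proof -
  define v where "v = A + B"
  have h: "hstep J > 0" "real J * hstep J = 1" "1 / hstep J = real J" using J by (auto simp: hstep_def)
  have dp: "drho J X p = real J *\<^sub>R A" using h A by (simp add: drho_def)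
  have dq: "drho J X q = real J *\<^sub>R B" using h B by (simp add: drho_def)
  have np: "norm (drho J X p) > 0" "norm (drho J X q) > 0" using pos pq by auto
  have An: "A \<noteq> 0" "B \<noteq> 0" using np dp dq by auto
  have Jp: "real J > 0" using J by simp
  let ?F = "\<lambda>j k. kappa k * (nuh J X j \<bullet> eta k) * norm (drho J X j)"
  have L: "(\<Sum>j\<in>{1..J}. ?F j j + ?F j (j - 1)) = (?F p p + ?F p (p - 1)) + (?F q q + ?F q (q - 1))"
    by (rule sum_two) (use pq oth in auto)
  have Fp: "?F p p = - kappa p * real J * (perp A \<bullet> v)"
    using nuh_norm[OF np(1), of "eta p"] ep dp unfolding v_def
    by (simp add: perp_scale mult.assoc)
  have Fq: "?F q (q - 1) = - kappa p * real J * (perp B \<bullet> v)"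
    using nuh_norm[OF np(2), of "eta (q - 1)"] eq dq kap unfolding v_def
    by (simp add: perp_scale mult.assoc)
  have "perp A \<bullet> v + perp B \<bullet> v = 0" unfolding v_def
    using perp_self[of A] perp_self[of B] perp_anti[of A B] by (simp add: inner_add_right)
  note pz = this
  have z1: "?F p (p - 1) = 0" using ep by simp
  have z2: "?F q q = 0" using eq by simp
  have "(?F p p + ?F p (p - 1)) + (?F q q + ?F q (q - 1)) = - kappa p * real J * (perp A \<bullet> v + perp B \<bullet> v)"
    unfolding Fp Fq z1 z2 by (simp add: algebra_simps)
  hence L0: "lumped J ?F = 0" unfolding lumped_def L using pz by simp
  let ?g = "\<lambda>j. drho J X j \<bullet> ((1 / norm (drho J X j)) *\<^sub>R drho J eta j)"
  have P: "(\<Sum>j\<in>{1..J}. hstep J * ?g j) = hstep J * ?g p + hstep J * ?g q"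
  proof (rule sum_two)
    show "\<forall>j\<in>{1..J}. j \<noteq> p \<and> j \<noteq> q \<longrightarrow> hstep J * ?g j = 0"
    proof (intro ballI impI)
      fix j assume "j \<in> {1..J}" "j \<noteq> p \<and> j \<noteq> q"
      hence "drho J eta j = 0" using oth unfolding drho_def by simp
      thus "hstep J * ?g j = 0" by simp
    qed
  qed (use pq in auto)
  have ep': "drho J eta p = real J *\<^sub>R v" using ep h unfolding drho_def v_def by simp
  have eq': "drho J eta q = - (real J *\<^sub>R v)" using eq h unfolding drho_def v_def by (simp add: algebra_simps)
  have gp: "hstep J * ?g p = A \<bullet> v / norm A"
  proof -
    have "?g p = real J * (A \<bullet> v) / norm A"
      unfolding dp ep' using Jp by (simp add: field_simps)
    thus ?thesis using h(2) by (simp add: field_simps)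
  qed
  have gq: "hstep J * ?g q = - (B \<bullet> v / norm B)"
  proof -
    have "?g q = - (real J * (B \<bullet> v) / norm B)"
      unfolding dq eq' using Jp by (simp add: field_simps)
    thus ?thesis using h(2) by (simp add: field_simps)
  qed
  show ?thesis using eqn L0 P gp gq unfolding pc_integral_def v_def by simp
qed
lemma bd_term0: "bd_term b r 0 = 0" by (cases b) simp_all
lemma bc_ok0: "bc_ok b 0" by (cases b) (simp_all)

theorem mainTheorem8:
  fixes per :: bool and J :: nat and bc0 bc1 :: bc and r0 r1 :: real
    and X :: "nat \<Rightarrow> vec2" and kappa :: "nat \<Rightarrow> real"
  assumes "J \<ge> 3"
    and "X \<in> Vh2 per J"
    and "\<forall>j\<in>{1..J}. norm (drho J X j) > 0"
    and "kappa \<in> Vh per J"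
    and "\<forall>eta \<in> Vh2_bd per J bc0 bc1.
           lumped J (\<lambda>j k. kappa k * (nuh J X j \<bullet> eta k) * norm (drho J X j))
         + pc_integral J (\<lambda>j. drho J X j \<bullet> ((1 / norm (drho J X j)) *\<^sub>R drho J eta j))
         = - bd_sum per J bc0 bc1 r0 r1 eta"
  shows "\<forall>j. ((per \<and> 1 \<le> j \<and> j \<le> J) \<or> (\<not> per \<and> 2 \<le> j \<and> j \<le> J)) \<longrightarrow>
           \<not> parallel (hvec J X j) (hvec J X (j - 1)) \<longrightarrow>
           norm (hvec J X j) = norm (hvec J X (j - 1))"
proof (intro allI impI)
  fix j assume jr: "(per \<and> 1 \<le> j \<and> j \<le> J) \<or> (\<not> per \<and> 2 \<le> j \<and> j \<le> J)"
    and np: "\<not> parallel (hvec J X j) (hvec J X (j - 1))"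
  have J1: "J \<ge> 1" using assms(1) by simp
  show "norm (hvec J X j) = norm (hvec J X (j - 1))"
  proof (cases "j \<ge> 2")
    case True
    define m where "m = j - 1"
    have m: "1 \<le> m" "m + 1 = j" "m < J" using True jr m_def by auto
    define A where "A = X m - X (m - 1)"
    define B where "B = X (m + 1) - X (m + 1 - 1)"
    define eta :: "nat \<Rightarrow> vec2" where "eta = (\<lambda>k. if k = m then A + B else 0)"
    have e0: "eta 0 = 0" "eta J = 0" using m by (auto simp: eta_def)
    have mem: "eta \<in> Vh2_bd per J bc0 bc1"
      using e0 m unfolding Vh2_bd_def Vh2_def by (auto simp: eta_def bc_ok0)
    have bd: "bd_sum per J bc0 bc1 r0 r1 eta = 0"
      unfolding bd_sum_def e0 by (simp add: bd_term0)
    have "A \<bullet> (A+B) / norm A - B \<bullet> (A+B) / norm B = 0"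
    proof (rule core[where p = m and q = "m+1" and X = X and eta = eta and kappa = kappa])
      show "lumped J (\<lambda>j k. kappa k * (nuh J X j \<bullet> eta k) * norm (drho J X j))
         + pc_integral J (\<lambda>j. drho J X j \<bullet> ((1 / norm (drho J X j)) *\<^sub>R drho J eta j)) = 0"
        using assms(5) mem bd by simp
    qed (use J1 m assms(3) in \<open>auto simp: A_def B_def eta_def\<close>)
    moreover have "hvec J X j = B" "hvec J X (j - 1) = A"
      using m by (auto simp: hvec_def A_def B_def)
    moreover have "drho J X m \<noteq> 0" "drho J X (m+1) \<noteq> 0" using assms(3) m by auto
    hence "A \<noteq> 0" "B \<noteq> 0" by (auto simp: drho_def A_def B_def)
    ultimately show ?thesis using final_alg np by metis
  next
    case False
    hence j1: "j = 1" "per" using jr by auto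
    define A where "A = X J - X (J - 1)"
    define B where "B = X 1 - X (1 - 1)"
    define eta :: "nat \<Rightarrow> vec2" where "eta = (\<lambda>k. if k = 0 \<or> k = J then A + B else 0)"
    have mem: "eta \<in> Vh2_bd per J bc0 bc1"
      unfolding Vh2_bd_def Vh2_def using j1 by (auto simp: eta_def)
    have bd: "bd_sum per J bc0 bc1 r0 r1 eta = 0"
      unfolding bd_sum_def using j1 by simp
    have kJ: "kappa J = kappa 0" using assms(4) j1 by (simp add: Vh_def)
    have "A \<bullet> (A+B) / norm A - B \<bullet> (A+B) / norm B = 0"
    proof (rule core[where p = J and q = 1 and X = X and eta = eta and kappa = kappa])
      show "lumped J (\<lambda>j k. kappa k * (nuh J X j \<bullet> eta k) * norm (drho J X j))
         + pc_integral J (\<lambda>j. drho J X j \<bullet> ((1 / norm (drho J X j)) *\<^sub>R drho J eta j)) = 0"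
        using assms(5) mem bd by simp
    qed (use J1 assms(1) assms(3) kJ in \<open>auto simp: A_def B_def eta_def\<close>)
    moreover have "hvec J X j = B" "hvec J X (j - 1) = A"
      using j1 by (auto simp: hvec_def A_def B_def)
    moreover have "drho J X J \<noteq> 0" "drho J X 1 \<noteq> 0" using assms(3) J1 by auto
    hence "A \<noteq> 0" "B \<noteq> 0" by (auto simp: drho_def A_def B_def)
    ultimately show ?thesis using final_alg np by metis
  qed
qed

end
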